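(* Consider the following three multigraphs. (a) $H_a$ has vertices $p,q,r,s,t,z$ and edges: three parallel edges $v_1,v_2,v_3$ joining $p,q$; three parallel edges $x_1,x_2,x_3$ joining $q,r$; two parallel edges $u_1,u_2$ joining $p,s$; two parallel edges $y_1,y_2$ joining $r,t$; and one edge $w$ joining $q,z$. (b) $H_b=H_a-z$ (i.e., $H_a$ with the edge $w$ and vertex $z$ removed). (c) $H_c$ has vertices $p_0,p_1,p_2,p_3,p_4$ and edges: one edge $u$ joining $p_0,p_3$; three parallel edges $v_1,v_2,v_3$ joining $p_0,p_1$; two parallel edges $x_1,x_2$ joining $p_1,p_2$; one edge $y$ joining $p_2,p_4$; one edge $w$ joining $p_0,p_4$. Let $L(\cdot)$ denote the line graph and $d(\cdot)$ the degree in the respective line graph. Then $L(H_a)$ is $f$-KP with $f(e)=d(e)-1$ for all vertices $e$; $L(H_b)$ is $f$-KP with $f(e)=d(e)$ for $e\in\{v_1,v_2,v_3,x_1,x_2,x_3\}$ and $f(e)=d(e)-1$ for $e\in\{u_1,u_2,y_1,y_2\}$; and $L(H_c)$ is $f$-KP with $f(e)=d(e)-1$ for all vertices $e$.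
   Context: The line graph of a multigraph $H$ has vertex set $E(H)$, two vertices adjacent when the corresponding edges share an endpoint (in particular parallel edges are adjacent). A digraph (in which some edges may be oriented in both directions) is kernel-perfect if every induced subdigraph $D'$ has a kernel, i.e., a set $I\subseteq V(D')$ with no arc between two of its vertices such that every vertex of $D'$ not in $I$ has an out-neighbor in $I$. A graph $G$ is $f$-KP if some supergraph $G'$ of $G$ on the same vertex set (possibly with parallel edges; equivalently, an orientation of $G$ in which some edges may be oriented in both directions) has a kernel-perfect orientation with $d^+(v)<f(v)$ for all $v$. *)

theory Defs
  imports Main
begin

text \<open>A digraph on vertex set V is given by an arc predicate A (A x y means an arc x -> y).
  An edge oriented in both directions corresponds to A x y and A y x.\<close>

definition is_kernel :: "('a \<Rightarrow> 'a \<Rightarrow> bool) \<Rightarrow> 'a set \<Rightarrow> 'a set \<Rightarrow> bool" where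
  "is_kernel A S I \<longleftrightarrow> I \<subseteq> S \<and> (\<forall>x\<in>I. \<forall>y\<in>I. \<not> A x y) \<and> (\<forall>x\<in>S - I. \<exists>y\<in>I. A x y)"

definition kernel_perfect :: "'a set \<Rightarrow> ('a \<Rightarrow> 'a \<Rightarrow> bool) \<Rightarrow> bool" where
  "kernel_perfect V A \<longleftrightarrow> (\<forall>S. S \<subseteq> V \<longrightarrow> (\<exists>I. is_kernel A S I))"

definition outdeg :: "'a set \<Rightarrow> ('a \<Rightarrow> 'a \<Rightarrow> bool) \<Rightarrow> 'a \<Rightarrow> nat" where
  "outdeg V A v = card {u \<in> V. A v u}"

definition f_KP :: "'a set \<Rightarrow> ('a \<Rightarrow> 'a \<Rightarrow> bool) \<Rightarrow> ('a \<Rightarrow> nat) \<Rightarrow> bool" where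
  "f_KP V E f \<longleftrightarrow> (\<exists>A.
      (\<forall>u v. A u v \<longrightarrow> u \<in> V \<and> v \<in> V \<and> E u v) \<and>
      (\<forall>u\<in>V. \<forall>v\<in>V. E u v \<longrightarrow> A u v \<or> A v u) \<and>
      kernel_perfect V A \<and>
      (\<forall>v\<in>V. outdeg V A v < f v))"

text \<open>A multigraph is given by an edge set Ed and an endpoint map ends (each edge has a
  2-element set of ends; parallel edges are distinct edges with the same ends).\<close>
definition lg_adj :: "('e \<Rightarrow> 'v set) \<Rightarrow> 'e \<Rightarrow> 'e \<Rightarrow> bool" where
  "lg_adj ends e e' \<longleftrightarrow> e \<noteq> e' \<and> ends e \<inter> ends e' \<noteq> {}"

definition lg_deg :: "'e set \<Rightarrow> ('e \<Rightarrow> 'v set) \<Rightarrow> 'e \<Rightarrow> nat" where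
  "lg_deg Ed ends e = card {e' \<in> Ed. lg_adj ends e e'}"

datatype va = p | q | r | s | t | z
datatype ea = v1 | v2 | v3 | x1 | x2 | x3 | u1 | u2 | y1 | y2 | w

fun ends_a :: "ea \<Rightarrow> va set" where
  "ends_a v1 = {p, q}" | "ends_a v2 = {p, q}" | "ends_a v3 = {p, q}"
| "ends_a x1 = {q, r}" | "ends_a x2 = {q, r}" | "ends_a x3 = {q, r}"
| "ends_a u1 = {p, s}" | "ends_a u2 = {p, s}"
| "ends_a y1 = {r, t}" | "ends_a y2 = {r, t}"
| "ends_a w = {q, z}"

definition E_a :: "ea set" where "E_a = UNIV"
text \<open>H_b = H_a - z: delete vertex z and its only incident edge w.\<close>
definition E_b :: "ea set" where "E_b = UNIV - {w}"

datatype vc = p0 | p1 | p2 | p3 | p4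
datatype ec = cu | cv1 | cv2 | cv3 | cx1 | cx2 | cy | cw

fun ends_c :: "ec \<Rightarrow> vc set" where
  "ends_c cu = {p0, p3}"
| "ends_c cv1 = {p0, p1}" | "ends_c cv2 = {p0, p1}" | "ends_c cv3 = {p0, p1}"
| "ends_c cx1 = {p1, p2}" | "ends_c cx2 = {p1, p2}"
| "ends_c cy = {p2, p4}"
| "ends_c cw = {p0, p4}"

definition E_c :: "ec set" where "E_c = UNIV"

end

theory Submission
  imports Defs
begin

definition semik :: "('a \<Rightarrow> 'a \<Rightarrow> bool) \<Rightarrow> 'a set \<Rightarrow> 'a set \<Rightarrow> bool" where
  "semik A S J \<longleftrightarrow> J \<noteq> {} \<and> J \<subseteq> S \<and> (\<forall>x\<in>J. \<forall>y\<in>J. \<not> A x y)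
     \<and> (\<forall>x\<in>J. \<forall>y\<in>S. A x y \<longrightarrow> (\<exists>z\<in>J. A y z))"

lemma kernel_from_semik:
  assumes "finite S" "\<forall>T\<subseteq>S. T \<noteq> {} \<longrightarrow> (\<exists>J. semik A T J)"
  shows "\<exists>I. is_kernel A S I"
  using assms
proof (induction "card S" arbitrary: S rule: less_induct)
  case less
  show ?case
  proof (cases "S = {}")
    case True
    then show ?thesis unfolding is_kernel_def by auto
  next
    case False
    then obtain J where J: "semik A S J" using less.prems by blast
    define S' where "S' = S - J - {y. \<exists>z\<in>J. A y z}"
    have sub: "S' \<subseteq> S" unfolding S'_def by auto
    have "S' \<subset> S" using J sub unfolding S'_def semik_def by auto
    then have "card S' < card S" using less.prems(1) by (simp add: psubset_card_mono)
    moreover have "finite S'" using sub less.prems(1) finite_subset by blast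
    moreover have "\<forall>T\<subseteq>S'. T \<noteq> {} \<longrightarrow> (\<exists>J. semik A T J)" using less.prems(2) sub by blast
    ultimately obtain K where K: "is_kernel A S' K" using less.hyps by blast
    have JS: "J \<subseteq> S" and Jind: "\<forall>x\<in>J. \<forall>y\<in>J. \<not> A x y"
      and Jabs: "\<forall>x\<in>J. \<forall>y\<in>S. A x y \<longrightarrow> (\<exists>z\<in>J. A y z)"
      using J unfolding semik_def by auto
    have KS: "K \<subseteq> S'" and Kind: "\<forall>x\<in>K. \<forall>y\<in>K. \<not> A x y"
      and Kabs: "\<forall>x\<in>S' - K. \<exists>y\<in>K. A x y"
      using K unfolding is_kernel_def by auto
    have "is_kernel A S (J \<union> K)"
      unfolding is_kernel_def
    proof (intro conjI ballI)
      show "J \<union> K \<subseteq> S" using JS KS sub by blast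
    next
      fix x y assume x: "x \<in> J \<union> K" and y: "y \<in> J \<union> K"
      show "\<not> A x y"
      proof
        assume a: "A x y"
        show False
        proof (cases "x \<in> J")
          case True
          show False
          proof (cases "y \<in> J")
            case True then show False using \<open>x \<in> J\<close> a Jind by blast
          next
            case False
            then have "y \<in> S'" using y KS by blast
            then have "y \<in> S" using sub by blast
            then obtain z where "z \<in> J" "A y z" using Jabs \<open>x \<in> J\<close> a by blast
            then show False using \<open>y \<in> S'\<close> unfolding S'_def by blast
          qed
        next
          case False
          then have xK: "x \<in> S'" "x \<in> K" using x KS by auto
          show False
          proof (cases "y \<in> J")
            case True then show False using xK a unfolding S'_def by blast
          next
            case False then show False using xK y a Kind by blast
          qed
        qed
      qed
    next
      fix x assume x: "x \<in> S - (J \<union> K)"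
      show "\<exists>y\<in>J \<union> K. A x y"
      proof (cases "x \<in> S'")
        case True
        then show ?thesis using Kabs x by blast
      next
        case False
        then show ?thesis using x unfolding S'_def by blast
      qed
    qed
    then show ?thesis by blast
  qed
qed

lemma kp_from_semik:
  assumes "finite V" "\<forall>T\<subseteq>V. T \<noteq> {} \<longrightarrow> (\<exists>J. semik A T J)"
  shows "kernel_perfect V A"
  unfolding kernel_perfect_def
proof (intro allI impI)
  fix S assume "S \<subseteq> V"
  then show "\<exists>I. is_kernel A S I"
    using assms by (intro kernel_from_semik) (auto intro: finite_subset)
qed

lemma semik_list:
  assumes "\<forall>(J,B)\<in>set L. J \<noteq> {} \<and> (\<forall>x\<in>J. \<forall>y\<in>J. \<not> A x y) \<and> (\<forall>x\<in>J. \<forall>y. A x y \<longrightarrow> y \<in> B \<or> (\<exists>z\<in>J. A y z))"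
    and "\<exists>(J,B)\<in>set L. J \<subseteq> S \<and> S \<inter> B = {}"
  shows "\<exists>J. semik A S J"
proof -
  obtain J B where JB: "(J,B) \<in> set L" "J \<subseteq> S" "S \<inter> B = {}" using assms(2) by blast
  have "J \<noteq> {} \<and> (\<forall>x\<in>J. \<forall>y\<in>J. \<not> A x y) \<and> (\<forall>x\<in>J. \<forall>y. A x y \<longrightarrow> y \<in> B \<or> (\<exists>z\<in>J. A y z))"
    using assms(1) JB(1) by fastforce
  then have "semik A S J" using JB(2,3) unfolding semik_def by blast
  then show ?thesis by blast
qed

fun out_a :: "ea \<Rightarrow> ea list" where
  "out_a v1 = [v2,v3,x3,u1,u2,w]"
| "out_a v2 = [v1,v3,x2,x3,u1,u2]"
| "out_a v3 = [v1,v2,x2,x3,w]"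
| "out_a x1 = [v1,v2,v3,x2,x3,w]"
| "out_a x2 = [v1,x1,x3,y1,y2]"
| "out_a x3 = [v2,x1,x2,y1,y2,w]"
| "out_a u1 = [v1,v3]"
| "out_a u2 = [v3,u1]"
| "out_a y1 = [x1,x2]"
| "out_a y2 = [x1,y1]"
| "out_a w = [v1,v2,x2,x3]"

definition A_a :: "ea \<Rightarrow> ea \<Rightarrow> bool" where "A_a x y \<longleftrightarrow> y \<in> set (out_a x)"

definition FB_a :: "(ea set \<times> ea set) list" where
  "FB_a = [({u1}, {v3}), ({y1}, {x1}), ({x3}, {y1, y2}), ({y2}, {x1, y1}), ({u2}, {v3, u1}), ({v3, y1}, {w}), ({v1}, {x3, u2}), ({y1, w}, {v2}), ({v3, y2}, {y1, w}), ({x2}, {v1, y2}), ({u1, w}, {x2}), ({v2}, {x2, u1, u2}), ({y2, w}, {v2, y1}), ({v3}, {x2, x3, w}), ({u2, w}, {x2, u1}), ({v1, y1}, {u2}), ({x1}, {v1, v2, v3, w}), ({x2, u1}, {y2}), ({x2, u2}, {u1, y2}), ({v2, y2}, {u1, u2, y1}), ({u1, y2, w}, {y1}), ({v2, y1}, {u1, u2}), ({u1, y1, w}, {}), ({w}, {v2, x2}), ({u2, y1, w}, {u1}), ({u2, y2, w}, {u1, y1}), ({v1, y2}, {u2, y1})]"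

lemma good_a: "\<forall>(J,B)\<in>set FB_a. J \<noteq> {} \<and> (\<forall>x\<in>J. \<forall>y\<in>J. \<not> A_a x y) \<and> (\<forall>x\<in>J. \<forall>y. A_a x y \<longrightarrow> y \<in> B \<or> (\<exists>z\<in>J. A_a y z))"
  unfolding FB_a_def A_a_def by auto

lemma prop_a:
  fixes S :: "ea set"
  assumes "v1 \<in> S \<or> v2 \<in> S \<or> v3 \<in> S \<or> x1 \<in> S \<or> x2 \<in> S \<or> x3 \<in> S \<or> u1 \<in> S \<or> u2 \<in> S \<or> y1 \<in> S \<or> y2 \<in> S \<or> w \<in> S"
  shows "(u1 \<in> S \<and> v3 \<notin> S) \<or> (y1 \<in> S \<and> x1 \<notin> S) \<or> (x3 \<in> S \<and> y1 \<notin> S \<and> y2 \<notin> S) \<or> (y2 \<in> S \<and> x1 \<notin> S \<and> y1 \<notin> S) \<or> (u2 \<in> S \<and> v3 \<notin> S \<and> u1 \<notin> S) \<or> (v3 \<in> S \<and> y1 \<in> S \<and> w \<notin> S) \<or> (v1 \<in> S \<and> x3 \<notin> S \<and> u2 \<notin> S) \<or> (y1 \<in> S \<and> w \<in> S \<and> v2 \<notin> S) \<or> (v3 \<in> S \<and> y2 \<in> S \<and> y1 \<notin> S \<and> w \<notin> S) \<or> (x2 \<in> S \<and> v1 \<notin> S \<and> y2 \<notin> S) \<or> (u1 \<in> S \<and> w \<in> S \<and> x2 \<notin> S) \<or> (v2 \<in> S \<and> x2 \<notin> S \<and> u1 \<notin> S \<and> u2 \<notin> S) \<or> (y2 \<in>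 S \<and> w \<in> S \<and> v2 \<notin> S \<and> y1 \<notin> S) \<or> (v3 \<in> S \<and> x2 \<notin> S \<and> x3 \<notin> S \<and> w \<notin> S) \<or> (u2 \<in> S \<and> w \<in> S \<and> x2 \<notin> S \<and> u1 \<notin> S) \<or> (v1 \<in> S \<and> y1 \<in> S \<and> u2 \<notin> S) \<or> (x1 \<in> S \<and> v1 \<notin> S \<and> v2 \<notin> S \<and> v3 \<notin> S \<and> w \<notin> S) \<or> (x2 \<in> S \<and> u1 \<in> S \<and> y2 \<notin> S) \<or> (x2 \<in> S \<and> u2 \<in> S \<and> u1 \<notin> S \<and> y2 \<notin> S) \<or> (v2 \<in> S \<and> y2 \<in> S \<and> u1 \<notin> S \<and> u2 \<notin> S \<and> y1 \<notin> S) \<or> (u1 \<in> S \<and> y2 \<in> S \<and> w \<in> S \<and> y1 \<notin> S) \<or> (v2 \<in> S \<and> y1 \<in> S \<and> u1 \<notin> S \<and> u2 \<notin> S) \<or> (u1 \<in> S \<and> y1 \<in> S \<and> w \<in> S) \<or> (w \<in> S \<and> v2 \<notin> S \<and> x2 \<notin> S) \<or> (u2 \<in> S \<and> y1 \<in> S \<and> w \<in> S \<and> u1 \<notin> S) \<or> (u2 \<in> S \<and> y2 \<in> S \<and> w \<in> S \<and> u1 \<notin> S \<and> y1 \<notin> S) \<or> (v1 \<in> S \<and> y2 \<in> S \<and> u2 \<notin> S \<and> y1 \<notin> S)"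
  using assms by sat

lemma semik_ex_a: "\<forall>T\<subseteq>E_a. T \<noteq> {} \<longrightarrow> (\<exists>J. semik A_a T J)"
proof (intro allI impI)
  fix S assume S: "S \<subseteq> E_a" "S \<noteq> {}"
  then obtain e where e: "e \<in> S" by blast
  have ne: "v1 \<in> S \<or> v2 \<in> S \<or> v3 \<in> S \<or> x1 \<in> S \<or> x2 \<in> S \<or> x3 \<in> S \<or> u1 \<in> S \<or> u2 \<in> S \<or> y1 \<in> S \<or> y2 \<in> S \<or> w \<in> S"
    using e S unfolding E_a_def by (cases e) auto
  have "\<exists>(J,B)\<in>set FB_a. J \<subseteq> S \<and> S \<inter> B = {}"
    using prop_a[OF ne] unfolding FB_a_def by auto
  then show "\<exists>J. semik A_a S J" by (rule semik_list[OF good_a])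
qed

fun out_b :: "ea \<Rightarrow> ea list" where
  "out_b v1 = [v2,x2,x3,u1,u2]"
| "out_b v2 = [v1,v3,x2,x3,u1,u2]"
| "out_b v3 = [v1,x2,x3,u1,u2]"
| "out_b x1 = [v1,v2,v3,x2,x3,y1]"
| "out_b x2 = [v1,v3,x1,x3,y1,y2]"
| "out_b x3 = [x1,x2,y1,y2]"
| "out_b u1 = [v3,u2]"
| "out_b u2 = []"
| "out_b y1 = [x1,y2]"
| "out_b y2 = [x1,x2]"
| "out_b w = []"

definition A_b :: "ea \<Rightarrow> ea \<Rightarrow> bool" where "A_b x y \<longleftrightarrow> y \<in> set (out_b x)"

definition FB_b :: "(ea set \<times> ea set) list" where
  "FB_b = [({u2}, {}), ({u1}, {u2}), ({v1}, {x3, u1, u2}), ({x2}, {y1}), ({y1}, {y2}), ({y2}, {x1}), ({x3}, {y1, y2}), ({v1, y2}, {u1, u2}), ({v3, y2}, {v1, u2}), ({x1}, {v1, v2, v3}), ({v2, y2}, {v3, u1, u2}), ({v3}, {v1, x3, u2}), ({v2}, {v3, x2, x3, u1, u2})]"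

lemma good_b: "\<forall>(J,B)\<in>set FB_b. J \<noteq> {} \<and> (\<forall>x\<in>J. \<forall>y\<in>J. \<not> A_b x y) \<and> (\<forall>x\<in>J. \<forall>y. A_b x y \<longrightarrow> y \<in> B \<or> (\<exists>z\<in>J. A_b y z))"
  unfolding FB_b_def A_b_def by auto

lemma prop_b:
  fixes S :: "ea set"
  assumes "v1 \<in> S \<or> v2 \<in> S \<or> v3 \<in> S \<or> x1 \<in> S \<or> x2 \<in> S \<or> x3 \<in> S \<or> u1 \<in> S \<or> u2 \<in> S \<or> y1 \<in> S \<or> y2 \<in> S"
  shows "(u2 \<in> S) \<or> (u1 \<in> S \<and> u2 \<notin> S) \<or> (v1 \<in> S \<and> x3 \<notin> S \<and> u1 \<notin> S \<and> u2 \<notin> S) \<or> (x2 \<in> S \<and> y1 \<notin> S) \<or> (y1 \<in> S \<and> y2 \<notin> S) \<or> (y2 \<in> S \<and> x1 \<notin> S) \<or> (x3 \<in> S \<and> y1 \<notin> S \<and> y2 \<notin> S) \<or> (v1 \<in> S \<and> y2 \<in> S \<and> u1 \<notin> S \<and> u2 \<notin> S) \<or> (v3 \<in> S \<and> y2 \<in> S \<and> v1 \<notin> S \<and> u2 \<notin> S) \<or> (x1 \<in> S \<and> v1 \<notin> S \<and> v2 \<notin> S \<and> v3 \<notin> S) \<or> (v2 \<in> S \<and> y2 \<in> S \<and> v3 \<notin> S \<and> u1 \<notin> S \<and> u2 \<notin> S) \<or> (v3 \<in> S \<and> v1 \<notin> S \<and> x3 \<notin> S \<and> u2 \<notin> S)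 \<or> (v2 \<in> S \<and> v3 \<notin> S \<and> x2 \<notin> S \<and> x3 \<notin> S \<and> u1 \<notin> S \<and> u2 \<notin> S)"
  using assms by sat

lemma semik_ex_b: "\<forall>T\<subseteq>E_b. T \<noteq> {} \<longrightarrow> (\<exists>J. semik A_b T J)"
proof (intro allI impI)
  fix S assume S: "S \<subseteq> E_b" "S \<noteq> {}"
  then obtain e where e: "e \<in> S" by blast
  have ne: "v1 \<in> S \<or> v2 \<in> S \<or> v3 \<in> S \<or> x1 \<in> S \<or> x2 \<in> S \<or> x3 \<in> S \<or> u1 \<in> S \<or> u2 \<in> S \<or> y1 \<in> S \<or> y2 \<in> S"
    using e S unfolding E_b_def by (cases e) auto
  have "\<exists>(J,B)\<in>set FB_b. J \<subseteq> S \<and> S \<inter> B = {}"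
    using prop_b[OF ne] unfolding FB_b_def by auto
  then show "\<exists>J. semik A_b S J" by (rule semik_list[OF good_b])
qed

fun out_c :: "ec \<Rightarrow> ec list" where
  "out_c cu = [cv1,cv3]"
| "out_c cv1 = [cv2,cx1,cx2]"
| "out_c cv2 = [cu,cv1,cv3,cw]"
| "out_c cv3 = [cv1,cv2,cx1,cx2]"
| "out_c cx1 = [cv2,cx2,cy]"
| "out_c cx2 = [cv2,cv3,cy]"
| "out_c cy = [cw]"
| "out_c cw = [cu,cv1,cv3]"

definition A_c :: "ec \<Rightarrow> ec \<Rightarrow> bool" where "A_c x y \<longleftrightarrow> y \<in> set (out_c x)"

definition FB_c :: "(ec set \<times> ec set) list" where
  "FB_c = [({cy}, {cw}), ({cx2}, {cv2, cy}), ({cv1, cy}, {}), ({cu}, {cv1, cv3}), ({cv3}, {cv1, cx1}), ({cv1}, {cx1, cx2}), ({cx1}, {cv2, cx2, cy}), ({cw}, {cu, cv1, cv3}), ({cv2}, {cu, cw}), ({cu, cx2}, {cy}), ({cv3, cy}, {cv1}), ({cu, cx1}, {cx2, cy}), ({cx2, cw}, {cu}), ({cx1, cw}, {cu, cx2})]"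

lemma good_c: "\<forall>(J,B)\<in>set FB_c. J \<noteq> {} \<and> (\<forall>x\<in>J. \<forall>y\<in>J. \<not> A_c x y) \<and> (\<forall>x\<in>J. \<forall>y. A_c x y \<longrightarrow> y \<in> B \<or> (\<exists>z\<in>J. A_c y z))"
  unfolding FB_c_def A_c_def by auto

lemma prop_c:
  fixes S :: "ec set"
  assumes "cu \<in> S \<or> cv1 \<in> S \<or> cv2 \<in> S \<or> cv3 \<in> S \<or> cx1 \<in> S \<or> cx2 \<in> S \<or> cy \<in> S \<or> cw \<in> S"
  shows "(cy \<in> S \<and> cw \<notin> S) \<or> (cx2 \<in> S \<and> cv2 \<notin> S \<and> cy \<notin> S) \<or> (cv1 \<in> S \<and> cy \<in> S) \<or> (cu \<in> S \<and> cv1 \<notin> S \<and> cv3 \<notin> S) \<or> (cv3 \<in> S \<and> cv1 \<notin> S \<and> cx1 \<notin> S) \<or> (cv1 \<in> S \<and> cx1 \<notin> S \<and> cx2 \<notin> S) \<or> (cx1 \<in> S \<and> cv2 \<notin> S \<and> cx2 \<notin> S \<and> cy \<notin> S) \<or> (cw \<in> S \<and> cu \<notin> S \<and> cv1 \<notin> S \<and> cv3 \<notin> S) \<or> (cv2 \<in> S \<and> cu \<notin> S \<and> cw \<notin> S) \<or> (cu \<in> S \<and> cx2 \<in> S \<and> cy \<notin> S) \<or> (cv3 \<in> S \<and> cy \<in> S \<and> cv1 \<notin> S) \<or> (cu \<in> S \<and> cx1 \<in> S \<and> cx2 \<notin> S \<and> cy \<notin> S) \<or> (cx2 \<in> S \<and>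 cw \<in> S \<and> cu \<notin> S) \<or> (cx1 \<in> S \<and> cw \<in> S \<and> cu \<notin> S \<and> cx2 \<notin> S)"
  using assms by sat

lemma semik_ex_c: "\<forall>T\<subseteq>E_c. T \<noteq> {} \<longrightarrow> (\<exists>J. semik A_c T J)"
proof (intro allI impI)
  fix S assume S: "S \<subseteq> E_c" "S \<noteq> {}"
  then obtain e where e: "e \<in> S" by blast
  have ne: "cu \<in> S \<or> cv1 \<in> S \<or> cv2 \<in> S \<or> cv3 \<in> S \<or> cx1 \<in> S \<or> cx2 \<in> S \<or> cy \<in> S \<or> cw \<in> S"
    using e S unfolding E_c_def by (cases e) auto
  have "\<exists>(J,B)\<in>set FB_c. J \<subseteq> S \<and> S \<inter> B = {}"
    using prop_c[OF ne] unfolding FB_c_def by auto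
  then show "\<exists>J. semik A_c S J" by (rule semik_list[OF good_c])
qed

lemma card_filter_distinct: "distinct L \<Longrightarrow> card {x \<in> set L. P x} = length (filter P L)"
  by (metis distinct_card distinct_filter set_filter)

definition all_a :: "ea list" where "all_a = [v1, v2, v3, x1, x2, x3, u1, u2, y1, y2, w]"
definition all_b :: "ea list" where "all_b = [v1, v2, v3, x1, x2, x3, u1, u2, y1, y2]"
definition all_c :: "ec list" where "all_c = [cu, cv1, cv2, cv3, cx1, cx2, cy, cw]"

lemma dist_a: "distinct all_a" by (simp add: all_a_def)
lemma dist_b: "distinct all_b" by (simp add: all_b_def)
lemma dist_c: "distinct all_c" by (simp add: all_c_def)

lemma Ea_eq: "E_a = set all_a"
  unfolding E_a_def all_a_def apply auto apply (case_tac x) apply auto done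
lemma Eb_eq: "E_b = set all_b"
  unfolding E_b_def all_b_def apply auto apply (case_tac x) apply auto done
lemma Ec_eq: "E_c = set all_c"
  unfolding E_c_def all_c_def apply auto apply (case_tac x) apply auto done

lemma fkp_a: "f_KP E_a (lg_adj ends_a) (\<lambda>e. lg_deg E_a ends_a e - 1)"
  unfolding f_KP_def
proof (intro exI[of _ A_a] conjI)
  show "\<forall>u v. A_a u v \<longrightarrow> u \<in> E_a \<and> v \<in> E_a \<and> lg_adj ends_a u v"
    apply (intro allI) apply (case_tac u) by (auto simp: A_a_def E_a_def lg_adj_def)
  show "\<forall>u\<in>E_a. \<forall>v\<in>E_a. lg_adj ends_a u v \<longrightarrow> A_a u v \<or> A_a v u"
    unfolding Ea_eq all_a_def by (simp add: A_a_def lg_adj_def)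
  show "kernel_perfect E_a A_a"
    by (rule kp_from_semik) (simp_all add: Ea_eq semik_ex_a)
  show "\<forall>v\<in>E_a. outdeg E_a A_a v < lg_deg E_a ends_a v - 1"
    unfolding outdeg_def lg_deg_def Ea_eq card_filter_distinct[OF dist_a]
    by (simp add: all_a_def A_a_def lg_adj_def)
qed

lemma fkp_b: "f_KP E_b (lg_adj ends_a)
           (\<lambda>e. if e \<in> {v1, v2, v3, x1, x2, x3} then lg_deg E_b ends_a e
                else lg_deg E_b ends_a e - 1)"
  unfolding f_KP_def
proof (intro exI[of _ A_b] conjI)
  show "\<forall>u v. A_b u v \<longrightarrow> u \<in> E_b \<and> v \<in> E_b \<and> lg_adj ends_a u v"
    apply (intro allI) apply (case_tac u) by (auto simp: A_b_def E_b_def lg_adj_def)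
  show "\<forall>u\<in>E_b. \<forall>v\<in>E_b. lg_adj ends_a u v \<longrightarrow> A_b u v \<or> A_b v u"
    unfolding Eb_eq all_b_def by (simp add: A_b_def lg_adj_def)
  show "kernel_perfect E_b A_b"
    by (rule kp_from_semik) (simp_all add: Eb_eq[symmetric] semik_ex_b, simp add: Eb_eq)
  show "\<forall>v\<in>E_b. outdeg E_b A_b v < (if v \<in> {v1, v2, v3, x1, x2, x3} then lg_deg E_b ends_a v
                else lg_deg E_b ends_a v - 1)"
    unfolding outdeg_def lg_deg_def Eb_eq card_filter_distinct[OF dist_b]
    by (simp add: all_b_def A_b_def lg_adj_def)
qed

lemma fkp_c: "f_KP E_c (lg_adj ends_c) (\<lambda>e. lg_deg E_c ends_c e - 1)"
  unfolding f_KP_def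
proof (intro exI[of _ A_c] conjI)
  show "\<forall>u v. A_c u v \<longrightarrow> u \<in> E_c \<and> v \<in> E_c \<and> lg_adj ends_c u v"
    apply (intro allI) apply (case_tac u) by (auto simp: A_c_def E_c_def lg_adj_def)
  show "\<forall>u\<in>E_c. \<forall>v\<in>E_c. lg_adj ends_c u v \<longrightarrow> A_c u v \<or> A_c v u"
    unfolding Ec_eq all_c_def by (simp add: A_c_def lg_adj_def)
  show "kernel_perfect E_c A_c"
    by (rule kp_from_semik) (simp_all add: Ec_eq semik_ex_c)
  show "\<forall>v\<in>E_c. outdeg E_c A_c v < lg_deg E_c ends_c v - 1"
    unfolding outdeg_def lg_deg_def Ec_eq card_filter_distinct[OF dist_c]
    by (simp add: all_c_def A_c_def lg_adj_def)
qed

theorem mainTheorem12: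
  shows "f_KP E_a (lg_adj ends_a) (\<lambda>e. lg_deg E_a ends_a e - 1)
       \<and> f_KP E_b (lg_adj ends_a)
           (\<lambda>e. if e \<in> {v1, v2, v3, x1, x2, x3} then lg_deg E_b ends_a e
                else lg_deg E_b ends_a e - 1)
       \<and> f_KP E_c (lg_adj ends_c) (\<lambda>e. lg_deg E_c ends_c e - 1)"
  using fkp_a fkp_b fkp_c by blast

end
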